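(* Let $\bar\alpha\in[0,1]$ and $n\ge 1$. Every maximizer $\boldsymbol{\alpha}^*=(\alpha^*_1,\dots,\alpha^*_n)\in[0,1]^n$ of the problem $$\max_{\boldsymbol{\alpha}\in[0,1]^n} C(\boldsymbol{\alpha})\quad\text{subject to}\quad G(\boldsymbol{\alpha})=0$$ has at most one index $i$ with $\alpha^*_i\in(0,1)$.
   Context: Model of a road with $n\ge1$ parallel lanes of common length $d>0$. Vehicles have length $L>0$. A vehicle keeps a headway (space gap) $\bar h$ to the vehicle in front of it if both it and the vehicle in front are autonomous, and headway $h$ otherwise, where $0\le \bar h<h$. Vehicle types within a lane are i.i.d. Bernoulli: each vehicle in lane $i$ is autonomous with probability $\alpha_i\in[0,1]$ (the lane's autonomy level). Set $k_1=(L+h)/d$ and $k_2=(h-\bar h)/d$, so $k_1>k_2>0$ and $k_1-k_2=(L+\bar h)/d>0$. The capacity of a lane with autonomy level $\alpha\in[0,1]$ is $$c(\alpha)=\frac{1}{k_1-k_2\alpha^2}=\frac{d}{L+h-(h-\bar h)\alpha^2}.$$ Let $\bar\alpha\in[0,1]$ be the overall fraction of autonomous vehicles on the road. For $\boldsymbol{\alpha}=(\alpha_1,\dots,\alpha_n)\in[0,1]^n$ define $C(\boldsymbol{\alpha})=\sum_{i=1}^n c(\alpha_i)$ (total capacity) and $G(\boldsymbol{\alpha})=\sum_{i=1}^n(\alpha_i-\bar\alpha)c(\alpha_i)$; the constraint $G(\boldsymbol{\alpha})=0$ expresses that the overall autonomy level equals $\bar\alpha$. *)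

theory Defs
  imports "HOL-Analysis.Analysis"
begin

definition cap :: "real \<Rightarrow> real \<Rightarrow> real \<Rightarrow> real \<Rightarrow> real \<Rightarrow> real" where
  "cap d L h hbar a = d / (L + h - (h - hbar) * a ^ 2)"

definition totcap :: "real \<Rightarrow> real \<Rightarrow> real \<Rightarrow> real \<Rightarrow> nat \<Rightarrow> (nat \<Rightarrow> real) \<Rightarrow> real" where
  "totcap d L h hbar n \<alpha> = (\<Sum>i<n. cap d L h hbar (\<alpha> i))"

definition Gcon :: "real \<Rightarrow> real \<Rightarrow> real \<Rightarrow> real \<Rightarrow> real \<Rightarrow> nat \<Rightarrow> (nat \<Rightarrow> real) \<Rightarrow> real" where
  "Gcon d L h hbar abar n \<alpha> = (\<Sum>i<n. (\<alpha> i - abar) * cap d L h hbar (\<alpha> i))"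

definition feasible :: "real \<Rightarrow> real \<Rightarrow> real \<Rightarrow> real \<Rightarrow> real \<Rightarrow> nat \<Rightarrow> (nat \<Rightarrow> real) \<Rightarrow> bool" where
  "feasible d L h hbar abar n \<alpha> \<longleftrightarrow>
     (\<forall>i<n. 0 \<le> \<alpha> i \<and> \<alpha> i \<le> 1) \<and> Gcon d L h hbar abar n \<alpha> = 0"

definition is_maximizer :: "real \<Rightarrow> real \<Rightarrow> real \<Rightarrow> real \<Rightarrow> real \<Rightarrow> nat \<Rightarrow> (nat \<Rightarrow> real) \<Rightarrow> bool" where
  "is_maximizer d L h hbar abar n \<alpha> \<longleftrightarrow>
     feasible d L h hbar abar n \<alpha> \<and>
     (\<forall>\<beta>. feasible d L h hbar abar n \<beta> \<longrightarrow> totcap d L h hbar n \<beta> \<le> totcap d L h hbar n \<alpha>)"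

end

theory Submission imports Defs begin

lemma den_pos: "(B::real) > 0 \<Longrightarrow> A > B \<Longrightarrow> 0 \<le> u \<Longrightarrow> u \<le> 1 \<Longrightarrow> A - B* u^2 > 0"
proof -
  assume a: "B > 0" "A > B" "0 \<le> u" "u \<le> 1"
  have "u^2 \<le> 1" using a by (simp add: power_le_one)
  hence "B* u^2 \<le> B" using a by (simp add: mult_left_le)
  thus ?thesis using a by linarith
qed

lemma ident:
  fixes A B d u v e :: real
  assumes "B>0" "A>B" "0\<le>u" "u<v" "v\<le>1"
  shows "(v-e)*(d/(A-B* v^2)) - (u-e)*(d/(A-B* u^2)) = ((A+B* u* v)/(B*(u+v)) - e)*(d/(A-B* v^2) - d/(A-B* u^2))"
proof -
  have p1: "A-B* v^2 > 0" using den_pos assms by simp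
  have p2: "A-B* u^2 > 0" using den_pos assms by simp
  have p3: "B*(u+v) > 0" using assms by simp
  have n1: "A-B* v^2 \<noteq> 0" "A-B* u^2 \<noteq> 0" "B*(u+v) \<noteq> 0" "u+v \<noteq> 0" using p1 p2 p3 by auto
  define Du where "Du = A-B* u^2"
  define Dv where "Dv = A-B* v^2"
  have nz: "Du \<noteq> 0" "Dv \<noteq> 0" using n1 Du_def Dv_def by auto
  have L: "(v-e)*(d/Dv) - (u-e)*(d/Du) = d*((v-e)*Du - (u-e)*Dv)/(Du*Dv)"
    using nz by (simp add: field_simps)
  have N: "(v-e)*Du - (u-e)*Dv = (v-u)*(A + B* u* v - e*B*(u+v))"
    unfolding Du_def Dv_def by (simp add: algebra_simps power2_eq_square)
  have R: "d/Dv - d/Du = d*(Du-Dv)/(Du*Dv)" using nz by (simp add: field_simps)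
  have M: "Du - Dv = B*(v-u)*(u+v)" unfolding Du_def Dv_def by (simp add: algebra_simps power2_eq_square)
  have T: "((A+B* u* v)/(B*(u+v)) - e) * (B*(v-u)*(u+v)) = (v-u)*(A + B* u* v - e*B*(u+v))"
    using n1 by (simp add: field_simps)
  have "(v-e)*(d/Dv) - (u-e)*(d/Du) = ((A+B* u* v)/(B*(u+v)) - e)*(d/Dv - d/Du)"
    unfolding L R M N T[symmetric] by (simp add: field_simps)
  thus ?thesis unfolding Du_def Dv_def .
qed

lemma cmono:
  fixes A B d u v :: real
  assumes "B>0" "A>B" "0\<le>u" "u<v" "v\<le>1" "d>0"
  shows "d/(A-B* u^2) < d/(A-B* v^2)"
proof -
  have p1: "A-B* v^2 > 0" using den_pos assms by simp
  have "u^2 < v^2" using assms by (simp add: power_strict_mono)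
  hence "A-B* v^2 < A-B* u^2" using assms by simp
  moreover have "(A-B* u^2)*(A-B* v^2) > 0" using p1 den_pos assms by simp
  ultimately show ?thesis using assms by (intro divide_strict_left_mono) auto
qed

lemma Tgt1:
  fixes A B u v :: real
  assumes "B>0" "A>B" "0\<le>u" "u<v" "v\<le>1"
  shows "(A+B* u* v)/(B*(u+v)) > 1"
proof -
  have p3: "B*(u+v) > 0" using assms by simp
  have "B*(1-u)*(1-v) \<ge> 0" using assms by simp
  hence "A+B* u* v > B*(u+v)" using assms by (simp add: algebra_simps)
  thus ?thesis using p3 by simp
qed

lemma Tdec:
  fixes A B x' x y y' :: real
  assumes "B>0" "A>B" "0\<le>x'" "x'<x" "x\<le>y" "y<y'" "y'\<le>1"
  shows "(A+B*x'*x)/(B*(x'+x)) > (A+B*y*y')/(B*(y+y'))"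
proof -
  have q1: "(A+B*x'*x)*(B*(x+y)) - (A+B*x*y)*(B*(x'+x)) = B*(y-x')*(A-B*x^2)"
    by (simp add: algebra_simps power2_eq_square)
  have q2: "(A+B*x*y)*(B*(y+y')) - (A+B*y*y')*(B*(x+y)) = B*(y'-x)*(A-B*y^2)"
    by (simp add: algebra_simps power2_eq_square)
  have dx: "A-B*x^2 > 0" using den_pos assms by simp
  have dy: "A-B*y^2 > 0" using den_pos assms by simp
  have r1: "(A+B*x'*x)*(B*(x+y)) > (A+B*x*y)*(B*(x'+x))"
  proof -
    have "B*(y-x')*(A-B*x^2) > 0" using dx assms by (intro mult_pos_pos) auto
    thus ?thesis using q1 by linarith
  qed
  have r2: "(A+B*x*y)*(B*(y+y')) > (A+B*y*y')*(B*(x+y))"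
  proof -
    have "B*(y'-x)*(A-B*y^2) > 0" using dy assms by (intro mult_pos_pos) auto
    thus ?thesis using q2 by linarith
  qed
  have s1: "(A+B*x'*x)/(B*(x'+x)) > (A+B*x*y)/(B*(x+y))"
    using r1 assms by (simp add: divide_simps)
  have s2: "(A+B*x*y)/(B*(x+y)) > (A+B*y*y')/(B*(y+y'))"
    using r2 assms by (simp add: divide_simps)
  show ?thesis using s1 s2 by linarith
qed

lemma sum_upd2:
  fixes F :: "real \<Rightarrow> real"
  assumes "finite S" "i \<in> S" "j \<in> S" "i \<noteq> j"
  shows "(\<Sum>k\<in>S. F ((\<alpha>(i:=u, j:=v)) k)) = (\<Sum>k\<in>S. F (\<alpha> k)) - F (\<alpha> i) - F (\<alpha> j) + F u + F v"
proof -
  let ?b = "\<alpha>(i:=u, j:=v)"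
  have jS: "j \<in> S - {i}" using assms by auto
  have f: "finite (S - {i})" using assms by auto
  have e1a: "(\<Sum>k\<in>S. F (?b k)) = F (?b i) + (\<Sum>k\<in>S-{i}. F (?b k))"
    by (rule sum.remove[OF assms(1,2)])
  have e1b: "(\<Sum>k\<in>S-{i}. F (?b k)) = F (?b j) + (\<Sum>k\<in>S-{i}-{j}. F (?b k))"
    by (rule sum.remove[OF f jS])
  have e2a: "(\<Sum>k\<in>S. F (\<alpha> k)) = F (\<alpha> i) + (\<Sum>k\<in>S-{i}. F (\<alpha> k))"
    by (rule sum.remove[OF assms(1,2)])
  have e2b: "(\<Sum>k\<in>S-{i}. F (\<alpha> k)) = F (\<alpha> j) + (\<Sum>k\<in>S-{i}-{j}. F (\<alpha> k))"
    by (rule sum.remove[OF f jS])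
  have bi: "?b i = u" "?b j = v" using assms(4) by auto
  have e1: "(\<Sum>k\<in>S. F (?b k)) = F u + (F v + (\<Sum>k\<in>S-{i}-{j}. F (?b k)))"
    using e1a e1b bi by simp
  have e2: "(\<Sum>k\<in>S. F (\<alpha> k)) = F (\<alpha> i) + (F (\<alpha> j) + (\<Sum>k\<in>S-{i}-{j}. F (\<alpha> k)))"
    using e2a e2b by simp
  have e3: "(\<Sum>k\<in>S-{i}-{j}. F (?b k)) = (\<Sum>k\<in>S-{i}-{j}. F (\<alpha> k))"
    by (rule sum.cong) auto
  show ?thesis using e1 e2 e3 by simp
qed

lemma cap_eq: "cap d L h hbar x = d/((L+h) - (h-hbar)*x^2)"
  by (simp add: cap_def)

lemma g_ident:
  assumes "d>0" "L>0" "0\<le>hbar" "hbar<h" "0\<le>u" "u<v" "v\<le>1"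
  shows "(v-e)*cap d L h hbar v - (u-e)*cap d L h hbar u
     = (((L+h)+(h-hbar)* u* v)/((h-hbar)*(u+v)) - e)*(cap d L h hbar v - cap d L h hbar u)"
  unfolding cap_eq using assms by (intro ident) auto

lemma cap_mono:
  assumes "d>0" "L>0" "0\<le>hbar" "hbar<h" "0\<le>u" "u<v" "v\<le>1"
  shows "cap d L h hbar u < cap d L h hbar v"
  unfolding cap_eq using assms by (intro cmono) auto

lemma g_mono:
  assumes "d>0" "L>0" "0\<le>hbar" "hbar<h" "e \<le> 1" "0\<le>u" "u<v" "v\<le>1"
  shows "(u-e)*cap d L h hbar u < (v-e)*cap d L h hbar v"
proof -
  have T: "((L+h)+(h-hbar)* u* v)/((h-hbar)*(u+v)) > 1" using assms by (intro Tgt1) auto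
  have c: "cap d L h hbar u < cap d L h hbar v" using cap_mono assms by blast
  have "(((L+h)+(h-hbar)* u* v)/((h-hbar)*(u+v)) - e)*(cap d L h hbar v - cap d L h hbar u) > 0"
  proof (rule mult_pos_pos)
    show "((L+h)+(h-hbar)* u* v)/((h-hbar)*(u+v)) - e > 0" using T assms(5) by linarith
    show "cap d L h hbar v - cap d L h hbar u > 0" using c by linarith
  qed
  thus ?thesis using g_ident[OF assms(1-4) assms(6-8), of e] by linarith
qed

lemma core:
  assumes "d>0" "L>0" "0\<le>hbar" "hbar<h" "e \<le> 1"
    "0\<le>x'" "x'<x" "x\<le>y" "y<y'" "y'\<le>1"
    "(x'-e)*cap d L h hbar x' + (y'-e)*cap d L h hbar y' = (x-e)*cap d L h hbar x + (y-e)*cap d L h hbar y"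
  shows "cap d L h hbar x + cap d L h hbar y < cap d L h hbar x' + cap d L h hbar y'"
proof -
  define T1 where "T1 = ((L+h)+(h-hbar)*x'*x)/((h-hbar)*(x'+x))"
  define T2 where "T2 = ((L+h)+(h-hbar)*y*y')/((h-hbar)*(y+y'))"
  define P where "P = cap d L h hbar x - cap d L h hbar x'"
  define Q where "Q = cap d L h hbar y' - cap d L h hbar y"
  have i1: "(x-e)*cap d L h hbar x - (x'-e)*cap d L h hbar x' = (T1 - e)*P"
    unfolding T1_def P_def using assms by (intro g_ident) auto
  have i2: "(y'-e)*cap d L h hbar y' - (y-e)*cap d L h hbar y = (T2 - e)*Q"
    unfolding T2_def Q_def using assms by (intro g_ident) auto
  have t: "T1 > T2" unfolding T1_def T2_def using assms by (intro Tdec) auto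
  have t2: "T2 > 1" unfolding T2_def using assms by (intro Tgt1) auto
  have P: "P > 0" unfolding P_def using cap_mono[of d L hbar h x' x] assms by auto
  have eq: "(T1 - e)*P = (T2 - e)*Q" using i1 i2 assms(11) by linarith
  have "Q > P"
  proof (rule ccontr)
    assume "\<not> Q > P"
    hence "(T2 - e)*Q \<le> (T2 - e)*P" using t2 assms by (intro mult_left_mono) auto
    moreover have "(T2 - e)*P < (T1 - e)*P" using t P by (intro mult_strict_right_mono) auto
    ultimately show False using eq by linarith
  qed
  thus ?thesis unfolding P_def Q_def by linarith
qed

lemma g_cont:
  assumes "d>0" "L>0" "0\<le>hbar" "hbar<h"
  shows "continuous_on {0..1} (\<lambda>t. (t-e)*cap d L h hbar t)"
proof -
  have "\<forall>t\<in>{0..1::real}. L + h - (h - hbar) * t^2 \<noteq> 0" using den_pos[of "h-hbar" "L+h"] assms by force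
  thus ?thesis unfolding cap_eq by (intro continuous_intros) auto
qed

lemma finish:
  assumes mx: "is_maximizer d L h hbar abar n \<alpha>" and ij: "i<n" "j<n" "i\<noteq>j"
    and uv: "0\<le>u" "u\<le>1" "0\<le>v" "v\<le>1"
    and geq: "(u-abar)*cap d L h hbar u + (v-abar)*cap d L h hbar v
       = (\<alpha> i-abar)*cap d L h hbar (\<alpha> i) + (\<alpha> j-abar)*cap d L h hbar (\<alpha> j)"
    and cgt: "cap d L h hbar (\<alpha> i) + cap d L h hbar (\<alpha> j) < cap d L h hbar u + cap d L h hbar v"
  shows False
proof -
  let ?b = "\<alpha>(i:=u, j:=v)"
  have fa: "feasible d L h hbar abar n \<alpha>" and le: "\<And>\<beta>. feasible d L h hbar abar n \<beta> \<Longrightarrow> totcap d L h hbar n \<beta> \<le> totcap d L h hbar n \<alpha>"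
    using mx unfolding is_maximizer_def by auto
  have S: "finite {..<n}" "i \<in> {..<n}" "j \<in> {..<n}" using ij by auto
  have G: "Gcon d L h hbar abar n ?b = Gcon d L h hbar abar n \<alpha>"
    unfolding Gcon_def using sum_upd2[OF S ij(3), of "\<lambda>t. (t-abar)*cap d L h hbar t" \<alpha> u v] geq by simp
  have fb: "feasible d L h hbar abar n ?b"
    using fa G uv unfolding feasible_def by auto
  have T: "totcap d L h hbar n ?b > totcap d L h hbar n \<alpha>"
    unfolding totcap_def using sum_upd2[OF S ij(3), of "\<lambda>t. cap d L h hbar t" \<alpha> u v] cgt by simp
  show False using le[OF fb] T by linarith
qed

lemma pair:
  assumes "d > 0" and "L > 0" and "0 \<le> hbar" and "hbar < h"
    and "0 \<le> abar" and "abar \<le> 1"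
    and mx: "is_maximizer d L h hbar abar n \<alpha>"
    and ij: "i<n" "j<n" "i\<noteq>j" and xy: "0 < \<alpha> i" "\<alpha> i \<le> \<alpha> j" "\<alpha> j < 1"
  shows False
proof -
  define g where "g t = (t-abar)*cap d L h hbar t" for t
  define x where "x = \<alpha> i"
  define y where "y = \<alpha> j"
  have xy': "0<x" "x\<le>y" "y<1" using xy x_def y_def by auto
  have gm: "\<And>u v. 0\<le>u \<Longrightarrow> u<v \<Longrightarrow> v\<le>1 \<Longrightarrow> g u < g v"
    unfolding g_def using g_mono assms by blast
  have gmw: "\<And>u v. 0\<le>u \<Longrightarrow> u\<le>v \<Longrightarrow> v\<le>1 \<Longrightarrow> g u \<le> g v"
    using gm by (metis order_le_less)
  have gc: "continuous_on {0..1} g" unfolding g_def using g_cont assms by blast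
  have gx1: "g x < g 1" using gm xy' by auto
  have gy1: "g y < g 1" using gm xy' by auto
  have g0x: "g 0 < g x" using gm xy' by auto
  have g0y: "g 0 < g y" using gm xy' by auto
  define K where "K = g x + g y"
  show False
  proof (cases "g 0 \<le> K - g 1")
    case True
    obtain x' where x': "0 \<le> x'" "x' \<le> 1" "g x' = K - g 1"
      using IVT'[of g 0 "K - g 1" 1, OF True _ _ gc] gx1 gy1 K_def by auto
    have "x' < x"
    proof (rule ccontr)
      assume "\<not> x' < x"
      hence "g x \<le> g x'" using gmw[of x x'] xy' x' by linarith
      thus False using x' K_def gy1 by linarith
    qed
    have c: "cap d L h hbar x + cap d L h hbar y < cap d L h hbar x' + cap d L h hbar 1"
      using core[of d L hbar h abar x' x y 1] assms x' \<open>x'<x\<close> xy' K_def unfolding g_def by auto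
    show False using finish[OF mx ij, of x' 1] x' c K_def unfolding g_def x_def y_def by auto
  next
    case False
    obtain y' where y': "0 \<le> y'" "y' \<le> 1" "g y' = K - g 0"
      using IVT'[of g 0 "K - g 0" 1, OF _ _ _ gc] False g0x g0y K_def by force
    have "y < y'"
    proof (rule ccontr)
      assume "\<not> y < y'"
      hence "g y' \<le> g y" using gmw[of y' y] xy' y' by linarith
      thus False using y' K_def g0x by linarith
    qed
    have c: "cap d L h hbar x + cap d L h hbar y < cap d L h hbar 0 + cap d L h hbar y'"
      using core[of d L hbar h abar 0 x y y'] assms y' \<open>y<y'\<close> xy' K_def unfolding g_def by auto
    show False using finish[OF mx ij, of 0 y'] y' c K_def unfolding g_def x_def y_def by auto
  qed
qed

theorem theorem1:
  fixes d L h hbar abar :: real and n :: nat and \<alpha> :: "nat \<Rightarrow> real"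
  assumes "d > 0" and "L > 0" and "0 \<le> hbar" and "hbar < h"
    and "0 \<le> abar" and "abar \<le> 1" and "n \<ge> 1"
    and "is_maximizer d L h hbar abar n \<alpha>"
  shows "card {i. i < n \<and> 0 < \<alpha> i \<and> \<alpha> i < 1} \<le> 1"
proof -
  have fin: "finite {i. i < n \<and> 0 < \<alpha> i \<and> \<alpha> i < 1}" by simp
  have "\<forall>a\<in>{i. i < n \<and> 0 < \<alpha> i \<and> \<alpha> i < 1}. \<forall>b\<in>{i. i < n \<and> 0 < \<alpha> i \<and> \<alpha> i < 1}. a = b"
  proof (intro ballI, rule ccontr)
    fix a b assume a: "a \<in> {i. i < n \<and> 0 < \<alpha> i \<and> \<alpha> i < 1}" and b: "b \<in> {i. i < n \<and> 0 < \<alpha> i \<and> \<alpha> i < 1}"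
      and ne: "a \<noteq> b"
    show False
    proof (cases "\<alpha> a \<le> \<alpha> b")
      case True
      thus False using pair[OF assms(1-6) assms(8), of a b] a b ne by auto
    next
      case False
      thus False using pair[OF assms(1-6) assms(8), of b a] a b ne by auto
    qed
  qed
  thus ?thesis using card_le_Suc0_iff_eq[OF fin] by simp
qed

end
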